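(* Let $0<p<1$ and let $k\ge 1$ be an integer. A coin showing heads (H) with probability $p$ and tails (T) with probability $1-p$ is flipped independently until the string $\mathrm{H}^k\mathrm{T}$ ($k$ heads followed by a tails) first appears as consecutive flips; let $Y$ be the number of flips. Then $E(Y^0)=1$ and for every $n\ge 1$, \[ E(Y^n) = \sum_{j=1}^{n-1} \binom{n}{j} E(Y^j) \sum_{i=1}^k \frac{(1-p)\, i^{n-j}}{p^{k-i+1}} + \sum_{i=1}^\infty \frac{(1-p)\, i^n}{p^{k-i+1}} \] \[ = \sum_{j=1}^{n-1} \binom{n}{j} E(Y^j) \sum_{i=0}^n \frac{e_{n-j,i}\, p^i - e_{n-j,i}^k\, p^{k+i+1}}{(1-p)^{n-j}p^{k+1}} + \sum_{i=0}^n \frac{e_{n,i}\,p^i}{(1-p)^n p^{k+1}}. \]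
   Context: The Eulerian numbers $e_{n,i}$ are defined by $e_{0,0}=1$, $e_{n,i}=0$ whenever $i\le 0$ (unless $n=i=0$) or $i>n$, and $e_{n,i}=i\,e_{n-1,i}+(n-i+1)\,e_{n-1,i-1}$ otherwise. For the integer parameter $k$, $e^k_{0,0}=1$, $e^k_{n,i}=0$ whenever $i<0$ or $i>n$, and $e^k_{n,i}=(k+i+1)\,e^k_{n-1,i}+(n-k-i)\,e^k_{n-1,i-1}$ otherwise. *)

theory Defs
  imports "HOL-Probability.Probability"
begin

text \<open>Coin flips are modelled as an infinite stream of booleans, True = heads (H),
  False = tails (T), each independently True with probability p.\<close>

text \<open>Number of flips until the pattern H^k T first appears as consecutive flips
  (positions 0-based in the stream; flips m-k-1, ..., m-1 form the pattern).
  On the null event where the pattern never appears the value is 0 (LEAST default).\<close>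
definition hkt_time :: "nat \<Rightarrow> bool stream \<Rightarrow> nat" where
  "hkt_time k \<omega> = (LEAST m. k + 1 \<le> m \<and> (\<forall>i<k. \<omega> !! (m - k - 1 + i)) \<and> \<not> \<omega> !! (m - 1))"

fun eulerian :: "nat \<Rightarrow> nat \<Rightarrow> nat" where
  "eulerian 0 i = (if i = 0 then 1 else 0)"
| "eulerian (Suc n) i =
     (if i = 0 \<or> i > Suc n then 0
      else i * eulerian n i + (Suc n - i + 1) * eulerian n (i - 1))"

fun eulerian_k :: "int \<Rightarrow> nat \<Rightarrow> nat \<Rightarrow> int" where
  "eulerian_k k 0 i = (if i = 0 then 1 else 0)"
| "eulerian_k k (Suc n) i =
     (if i > Suc n then 0
      else (k + int i + 1) * eulerian_k k n i
         + (int (Suc n) - k - int i) * (if i = 0 then 0 else eulerian_k k n (i - 1)))"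

end

theory Submission
  imports Defs "HOL-Analysis.FPS_Convergence"
begin


fun gE :: "int \<Rightarrow> nat \<Rightarrow> nat \<Rightarrow> int" where
  "gE c 0 i = (if i = 0 then 1 else 0)"
| "gE c (Suc n) i = (if i > Suc n then 0 else (c + int i) * gE c n i
      + (int n + 2 - c - int i) * (if i = 0 then 0 else gE c n (i - 1)))"

lemma gE_eulerian_k: "eulerian_k k n i = gE (k + 1) n i"
  by (induction n arbitrary: i) (auto simp: algebra_simps)

lemma ialg: "(x::int) + (1 + a - b) * x = (2 + (a - b)) * x"
  by (simp add: algebra_simps)

lemma gE_eulerian: "int (eulerian n i) = gE 0 n i"
proof (induction n arbitrary: i)
  case 0 then show ?case by simp
next
  case (Suc n)
  show ?case
  proof (cases "i = 0 \<or> i > Suc n")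
    case True then show ?thesis by auto
  next
    case False
    then have h: "int (Suc n - i + 1) = int n + 2 - int i" by auto
    have "eulerian (Suc n) i = i * eulerian n i + (Suc n - i + 1) * eulerian n (i - 1)"
      using False by (simp del: Nat.add_diff_assoc2 add_Suc_right)
    then have "int (eulerian (Suc n) i) = int i * int (eulerian n i) + int (Suc n - i + 1) * int (eulerian n (i - 1))"
      by (simp only: of_nat_add of_nat_mult)
    also have "\<dots> = gE 0 (Suc n) i" unfolding h Suc using False by simp
    finally show ?thesis .
  qed
qed

lemma gE_zero: "i > n \<Longrightarrow> gE c n i = 0"
  by (induction n arbitrary: i) auto

definition AF :: "int \<Rightarrow> nat \<Rightarrow> real fps" where
  "AF c n = Abs_fps (\<lambda>l. (of_nat l + of_int c) ^ n)"

definition PF :: "int \<Rightarrow> nat \<Rightarrow> real fps" where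
  "PF c n = Abs_fps (\<lambda>i. of_int (gE c n i))"

lemma AF_Suc: "AF c (Suc n) = fps_const (of_int c) * AF c n + fps_X * fps_deriv (AF c n)"
  by (rule fps_ext) (auto simp: AF_def algebra_simps)

lemma PF_Suc: "PF c (Suc n) = fps_const (of_int c) * PF c n - fps_const (of_int c) * (fps_X * PF c n)
   + fps_X * fps_deriv (PF c n) - fps_X * (fps_X * fps_deriv (PF c n)) + fps_const (of_nat (Suc n)) * (fps_X * PF c n)"
proof (rule fps_ext)
  fix i
  show "fps_nth (PF c (Suc n)) i = fps_nth (fps_const (of_int c) * PF c n - fps_const (of_int c) * (fps_X * PF c n)
   + fps_X * fps_deriv (PF c n) - fps_X * (fps_X * fps_deriv (PF c n)) + fps_const (of_nat (Suc n)) * (fps_X * PF c n)) i"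
  proof (cases "i = 0")
    case True then show ?thesis by (simp add: PF_def)
  next
    case False
    then obtain j where j: "i = Suc j" by (cases i) auto
    show ?thesis
    proof (cases "i > Suc n")
      case True
      then show ?thesis using j by (simp add: PF_def gE_zero)
    next
      case False
      then show ?thesis using j by (cases j) (simp_all add: PF_def algebra_simps)
    qed
  qed
qed

lemma alg:
  fixes a :: "'a :: comm_ring_1"
  shows "a * (D * E) = P \<Longrightarrow> a' * (D * E) = P' + m * a * E \<Longrightarrow> D = 1 - X \<Longrightarrow>
    (c * a + X * a') * (D * (D * E)) = c * P - c * (X * P) + X * P' - X * (X * P') + m * (X * P)"
proof -
  assume h1: "a * (D * E) = P" and h2: "a' * (D * E) = P' + m * a * E" and h3: "D = 1 - X"
  have "(c * a + X * a') * (D * (D * E)) = c * D * (a * (D * E)) + X * D * (a' * (D * E))"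
    by (simp add: algebra_simps)
  also have "\<dots> = c * D * P + X * D * (P' + m * a * E)" using h1 h2 by simp
  also have "\<dots> = c * D * P + X * D * P' + m * X * (a * (D * E))" by (simp add: algebra_simps)
  also have "\<dots> = c * D * P + X * D * P' + m * X * P" using h1 by simp
  also have "\<dots> = c * P - c * (X * P) + X * P' - X * (X * P') + m * (X * P)"
    unfolding h3 by (simp add: algebra_simps)
  finally show ?thesis .
qed

lemma AF_PF: "AF c n * (1 - fps_X) ^ Suc n = PF c n"
proof (induction n)
  case 0
  show ?case by (rule fps_ext) (simp add: AF_def PF_def algebra_simps)
next
  case (Suc n)
  let ?D = "1 - fps_X :: real fps"
  have d: "fps_deriv (AF c n * ?D ^ Suc n) = fps_deriv (PF c n)" using Suc by simp
  have dd: "fps_deriv (?D ^ Suc n) = - fps_const (of_nat (Suc n)) * ?D ^ n"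
    unfolding fps_deriv_power by simp
  have e: "fps_deriv (AF c n) * ?D ^ Suc n = fps_deriv (PF c n) + fps_const (of_nat (Suc n)) * AF c n * ?D ^ n"
  proof -
    have "AF c n * fps_deriv (?D ^ Suc n) + fps_deriv (AF c n) * ?D ^ Suc n = fps_deriv (PF c n)"
      using d by (simp only: fps_deriv_mult)
    then have "AF c n * (- fps_const (of_nat (Suc n)) * ?D ^ n) + fps_deriv (AF c n) * ?D ^ Suc n = fps_deriv (PF c n)"
      by (simp only: dd)
    then have "fps_deriv (AF c n) * ?D ^ Suc n = fps_deriv (PF c n) - AF c n * (- fps_const (of_nat (Suc n)) * ?D ^ n)"
      by (simp only: eq_diff_eq add.commute)
    then show ?thesis by (simp only: mult_minus_left mult_minus_right diff_minus_eq_add mult.assoc mult.left_commute[of "AF c n"])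
  qed
  show ?case unfolding AF_Suc PF_Suc power_Suc
    by (rule alg[OF _ _ refl]) (use Suc e in \<open>simp_all only: power_Suc mult.assoc\<close>)

qed

lemma conv_AF: "fps_conv_radius (AF c n) \<ge> 1"
proof (induction n)
  case 0
  have "AF c 0 = Abs_fps (\<lambda>_. 1)" by (simp add: AF_def)
  moreover have "fps_conv_radius (Abs_fps (\<lambda>_. 1 :: real)) \<ge> 1"
    unfolding fps_conv_radius_def
    by (rule conv_radius_geI_ex') (auto intro!: summable_geometric)
  ultimately show ?case by simp
next
  case (Suc n)
  have "fps_conv_radius (fps_const (of_int c) * AF c n) \<ge> 1"
    using fps_conv_radius_mult[of "fps_const (of_int c)" "AF c n"] Suc by simp
  moreover have "fps_conv_radius (fps_X * fps_deriv (AF c n)) \<ge> 1"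
    using fps_conv_radius_mult[of "fps_X" "fps_deriv (AF c n)"] Suc fps_conv_radius_deriv[of "AF c n"]
    by simp
  ultimately show ?case
    unfolding AF_Suc using fps_conv_radius_add[of "fps_const (of_int c) * AF c n" "fps_X * fps_deriv (AF c n)"]
    by (simp add: min_def split: if_splits)
qed

lemma series_AF:
  assumes "0 \<le> x" "x < 1"
  shows "(\<lambda>l. (real l + of_int c) ^ n * x ^ l) sums ((\<Sum>i\<le>n. of_int (gE c n i) * x ^ i) / (1 - x) ^ Suc n)"
proof -
  have xr: "ereal (norm x) < fps_conv_radius (AF c n)"
  proof -
    have "ereal x < 1" using assms by simp
    from less_le_trans[OF this conv_AF[of c n]] show ?thesis using assms by simp
  qed
  have s: "(\<lambda>l. fps_nth (AF c n) l * x ^ l) sums eval_fps (AF c n) x"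
    by (rule sums_eval_fps) (use xr in auto)
  have D: "fps_conv_radius ((1 - fps_X :: real fps) ^ Suc n) = \<infinity>"
  proof -
    have "fps_conv_radius (1 - fps_X :: real fps) \<ge> \<infinity>"
      using fps_conv_radius_diff[of 1 "fps_X :: real fps"] by simp
    then have "fps_conv_radius ((1 - fps_X :: real fps) ^ Suc n) \<ge> \<infinity>"
      using fps_conv_radius_power[of "1 - fps_X :: real fps" "Suc n"] by (auto intro: order_trans)
    then show ?thesis by simp
  qed
  have "eval_fps (PF c n) x = eval_fps (AF c n) x * (1 - x) ^ Suc n"
  proof -
    have "eval_fps (PF c n) x = eval_fps (AF c n) x * eval_fps ((1 - fps_X) ^ Suc n) x"
      unfolding AF_PF[symmetric] by (rule eval_fps_mult) (use xr D in auto)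
    also have "eval_fps ((1 - fps_X :: real fps) ^ Suc n) x = (1 - x) ^ Suc n"
    proof -
      have r: "ereal (norm x) < fps_conv_radius (1 - fps_X :: real fps)"
        using fps_conv_radius_diff[of 1 "fps_X :: real fps"] by simp
      have "eval_fps ((1 - fps_X :: real fps) ^ Suc n) x = eval_fps (1 - fps_X :: real fps) x ^ Suc n"
        by (rule eval_fps_power) (use r in auto)
      also have "eval_fps (1 - fps_X :: real fps) x = 1 - x"
        by (subst eval_fps_diff) auto
      finally show ?thesis .
    qed
    finally show ?thesis .
  qed
  moreover have "eval_fps (PF c n) x = (\<Sum>i\<le>n. of_int (gE c n i) * x ^ i)"
    unfolding eval_fps_def PF_def
    by (subst suminf_finite[of "{..n}"]) (auto simp: gE_zero)
  ultimately have "eval_fps (AF c n) x = (\<Sum>i\<le>n. of_int (gE c n i) * x ^ i) / (1 - x) ^ Suc n"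
    using assms by (simp add: field_simps)
  with s show ?thesis by (simp add: AF_def)
qed



definition PP :: "nat \<Rightarrow> bool stream \<Rightarrow> nat \<Rightarrow> bool" where
  "PP k \<omega> m \<longleftrightarrow> k + 1 \<le> m \<and> (\<forall>i<k. \<omega> !! (m - k - 1 + i)) \<and> \<not> \<omega> !! (m - 1)"

lemma hkt_PP: "hkt_time k \<omega> = (LEAST m. PP k \<omega> m)"
  unfolding hkt_time_def PP_def ..

definition pre :: "nat \<Rightarrow> bool stream \<Rightarrow> bool stream" where
  "pre j \<omega> = replicate j True @- (False ## \<omega>)"

lemma pre_snth: "pre j \<omega> !! t = (if t < j then True else if t = j then False else \<omega> !! (t - j - 1))"
proof -
  consider "t < j" | "t = j" | d where "t = j + Suc d" using less_linear[of t j] less_iff_Suc_add by auto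
  then show ?thesis
    by cases (auto simp: pre_def shift_snth Stream_snth)
qed

lemma pre_snth_gt: "t > j \<Longrightarrow> pre j \<omega> !! t = \<omega> !! (t - j - 1)"
  by (simp add: pre_snth)

lemma pre_Suc: "True ## pre j \<omega> = pre (Suc j) \<omega>"
  by (simp add: pre_def)

lemma hkt_pre_ge:
  assumes "k \<le> j"
  shows "hkt_time k (pre j \<omega>) = j + 1"
  unfolding hkt_PP
proof (rule Least_equality)
  show "PP k (pre j \<omega>) (j + 1)"
    using assms by (auto simp: PP_def pre_snth)
next
  fix m assume "PP k (pre j \<omega>) m"
  then have "m \<ge> 1" "\<not> pre j \<omega> !! (m - 1)" by (auto simp: PP_def)
  then show "j + 1 \<le> m" by (auto simp: pre_snth split: if_splits)
qed

lemma PP_pre_lt: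
  assumes "j < k"
  shows "PP k (pre j \<omega>) m \<longleftrightarrow> (j + 1 \<le> m \<and> PP k \<omega> (m - j - 1))"
proof
  assume H: "PP k (pre j \<omega>) m"
  then have m: "k + 1 \<le> m" and T: "\<And>i. i < k \<Longrightarrow> pre j \<omega> !! (m - k - 1 + i)"
    and F: "\<not> pre j \<omega> !! (m - 1)" by (auto simp: PP_def)
  have m2: "k + 1 \<le> m - j - 1"
  proof (rule ccontr)
    assume "\<not> ?thesis"
    then have "j - (m - k - 1) < k" "m - k - 1 + (j - (m - k - 1)) = j" using m assms by auto
    with T[of "j - (m - k - 1)"] show False by (simp add: pre_snth)
  qed
  have "m - 1 > j" "m - 1 - j - 1 = m - j - 1 - 1" using m assms by auto
  then have "\<not> \<omega> !! (m - j - 1 - 1)" using F by (simp add: pre_snth)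
  moreover have "\<omega> !! (m - j - 1 - k - 1 + i)" if "i < k" for i
  proof -
    have "pre j \<omega> !! (m - k - 1 + i)" using T that .
    moreover have "m - k - 1 + i > j" using m2 by auto
    moreover have e: "m - k - 1 + i - j - 1 = m - j - 1 - k - 1 + i" using m2 by auto
    ultimately show ?thesis using pre_snth_gt[of j "m - k - 1 + i" \<omega>] by (simp only: e)
  qed
  ultimately show "j + 1 \<le> m \<and> PP k \<omega> (m - j - 1)" using m2 m assms by (auto simp: PP_def)
next
  assume H: "j + 1 \<le> m \<and> PP k \<omega> (m - j - 1)"
  then have m2: "k + 1 \<le> m - j - 1" and T: "\<And>i. i < k \<Longrightarrow> \<omega> !! (m - j - 1 - k - 1 + i)"
    and F: "\<not> \<omega> !! (m - j - 1 - 1)" by (auto simp: PP_def)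
  have "pre j \<omega> !! (m - k - 1 + i)" if "i < k" for i
  proof -
    have "m - k - 1 + i > j" using m2 by auto
    moreover have e: "m - k - 1 + i - j - 1 = m - j - 1 - k - 1 + i" using m2 by auto
    ultimately show ?thesis using T[OF that] pre_snth_gt[of j "m - k - 1 + i" \<omega>] by (simp only: e)
  qed
  moreover have "\<not> pre j \<omega> !! (m - 1)"
  proof -
    have "m - 1 > j" "m - 1 - j - 1 = m - j - 1 - 1" using m2 by auto
    then show ?thesis using F by (simp add: pre_snth)
  qed
  ultimately show "PP k (pre j \<omega>) m" using m2 by (auto simp: PP_def)
qed

lemma ex_PP_pre_lt:
  assumes "j < k"
  shows "(\<exists>m. PP k (pre j \<omega>) m) \<longleftrightarrow> (\<exists>m. PP k \<omega> m)"
proof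
  assume "\<exists>m. PP k (pre j \<omega>) m"
  then show "\<exists>m. PP k \<omega> m" using PP_pre_lt[OF assms] by blast
next
  assume "\<exists>m. PP k \<omega> m"
  then obtain m where "PP k \<omega> m" by blast
  then have "PP k (pre j \<omega>) (m + j + 1)" using PP_pre_lt[OF assms, of \<omega> "m + j + 1"] by simp
  then show "\<exists>m. PP k (pre j \<omega>) m" by blast
qed

lemma ex_PP_pre_ge:
  assumes "k \<le> j"
  shows "PP k (pre j \<omega>) (j + 1)"
  using assms by (auto simp: PP_def pre_snth)

lemma hkt_pre_lt:
  assumes "j < k" "\<exists>m. PP k \<omega> m"
  shows "hkt_time k (pre j \<omega>) = j + 1 + hkt_time k \<omega>"
  unfolding hkt_PP
proof (rule Least_equality)
  have "PP k \<omega> (LEAST m. PP k \<omega> m)" using assms(2) by (auto intro: LeastI_ex)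
  moreover have "PP k \<omega> (j + 1 + (LEAST m. PP k \<omega> m) - j - 1)" using calculation by simp
  ultimately show "PP k (pre j \<omega>) (j + 1 + (LEAST m. PP k \<omega> m))"
    using PP_pre_lt[OF assms(1)] by simp
next
  fix m assume "PP k (pre j \<omega>) m"
  then have "j + 1 \<le> m" "PP k \<omega> (m - j - 1)" using PP_pre_lt[OF assms(1)] by auto
  then show "j + 1 + (LEAST m. PP k \<omega> m) \<le> m" using Least_le[of "PP k \<omega>" "m - j - 1"] by simp
qed



lemma pred_snth[measurable]: "Measurable.pred (stream_space (measure_pmf P)) (\<lambda>\<omega>. \<omega> !! n)"
proof -
  have "(\<lambda>\<omega>. \<omega> !! n) \<in> measurable (stream_space (measure_pmf P)) (measure_pmf P)" by measurable
  then show ?thesis by (simp add: measurable_cong_sets)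
qed

lemma pred_PP[measurable]: "Measurable.pred (stream_space (measure_pmf P)) (\<lambda>\<omega>. PP k \<omega> m)"
  unfolding PP_def using pred_snth by measurable

lemma meas_hkt[measurable]: "hkt_time k \<in> measurable (stream_space (measure_pmf P)) (count_space UNIV)"
  unfolding hkt_PP by measurable

lemma meas_pre[measurable]: "pre j \<in> measurable (stream_space (measure_pmf P)) (stream_space (measure_pmf P))"
proof (induction j)
  case 0
  show ?case unfolding pre_def by simp
next
  case (Suc j)
  have "pre (Suc j) = (\<lambda>\<omega>. True ## pre j \<omega>)" by (simp add: pre_Suc fun_eq_iff)
  moreover have "(\<lambda>\<omega>. True ## pre j \<omega>) \<in> measurable (stream_space (measure_pmf P)) (stream_space (measure_pmf P))"
    by (rule measurable_Stream) (use Suc in auto)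
  ultimately show ?case by simp
qed

lemma meas_Stream_const[measurable]: "(\<lambda>\<omega>. x ## \<omega>) \<in> measurable (stream_space (measure_pmf P)) (stream_space (measure_pmf P))"
  by measurable

locale coin =
  fixes p :: real
  assumes p0: "0 < p" and p1: "p < 1"
begin

abbreviation "MM \<equiv> stream_space (measure_pmf (bernoulli_pmf p))"

lemma prob_MM: "prob_space MM"
  by (rule prob_space.prob_space_stream_space) (rule prob_space_measure_pmf)

lemma one_step:
  assumes [measurable]: "f \<in> borel_measurable MM"
  shows "(\<integral>\<^sup>+\<omega>. f \<omega> \<partial>MM) = ennreal p * (\<integral>\<^sup>+\<omega>. f (True ## \<omega>) \<partial>MM) + ennreal (1 - p) * (\<integral>\<^sup>+\<omega>. f (False ## \<omega>) \<partial>MM)"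
proof -
  have "(\<integral>\<^sup>+\<omega>. f \<omega> \<partial>MM) = (\<integral>\<^sup>+x. (\<integral>\<^sup>+X. f (x ## X) \<partial>MM) \<partial>measure_pmf (bernoulli_pmf p))"
    by (rule prob_space.nn_integral_stream_space[OF prob_space_measure_pmf]) simp
  also have "\<dots> = (\<integral>\<^sup>+X. f (True ## X) \<partial>MM) * ennreal p + (\<integral>\<^sup>+X. f (False ## X) \<partial>MM) * ennreal (1 - p)"
    using p0 p1 by (subst nn_integral_bernoulli_pmf) auto
  finally show ?thesis by (simp add: mult.commute)
qed

lemma all_less_True_Stream: "(\<forall>i<Suc j. (True ## \<omega>) !! i) \<longleftrightarrow> (\<forall>i<j. \<omega> !! i)"
proof
  assume H: "\<forall>i<Suc j. (True ## \<omega>) !! i"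
  show "\<forall>i<j. \<omega> !! i"
  proof (intro allI impI)
    fix i assume "i < j"
    then have "(True ## \<omega>) !! Suc i" using H by blast
    then show "\<omega> !! i" by simp
  qed
next
  assume H: "\<forall>i<j. \<omega> !! i"
  show "\<forall>i<Suc j. (True ## \<omega>) !! i"
  proof (intro allI impI)
    fix i assume "i < Suc j"
    then show "(True ## \<omega>) !! i" using H by (cases i) auto
  qed
qed

lemma all_True_Stream: "(\<forall>i. (True ## \<omega>) !! i) \<longleftrightarrow> (\<forall>i. \<omega> !! i)"
proof
  assume H: "\<forall>i. (True ## \<omega>) !! i"
  show "\<forall>i. \<omega> !! i"
  proof
    fix i
    have "(True ## \<omega>) !! Suc i" using H by blast
    then show "\<omega> !! i" by simp
  qed
next
  assume H: "\<forall>i. \<omega> !! i"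
  show "\<forall>i. (True ## \<omega>) !! i"
  proof
    fix i
    show "(True ## \<omega>) !! i" using H by (cases i) auto
  qed
qed

definition cond :: "nat \<Rightarrow> bool stream \<Rightarrow> bool" where
  "cond j \<omega> \<longleftrightarrow> (\<forall>i<j. \<omega> !! i) \<and> \<not> \<omega> !! j"

lemma pred_cond[measurable]: "Measurable.pred MM (cond j)"
  unfolding cond_def by measurable

lemma prefix:
  assumes "f \<in> borel_measurable MM"
  shows "(\<integral>\<^sup>+\<omega>. (if cond j \<omega> then f \<omega> else 0) \<partial>MM) = ennreal (p ^ j * (1 - p)) * (\<integral>\<^sup>+\<omega>. f (pre j \<omega>) \<partial>MM)"
  using assms
proof (induction j arbitrary: f)
  case 0
  note [measurable] = 0
  have "(\<integral>\<^sup>+\<omega>. (if cond 0 \<omega> then f \<omega> else 0) \<partial>MM) =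
     ennreal p * (\<integral>\<^sup>+\<omega>. (if cond 0 (True ## \<omega>) then f (True ## \<omega>) else 0) \<partial>MM) +
     ennreal (1 - p) * (\<integral>\<^sup>+\<omega>. (if cond 0 (False ## \<omega>) then f (False ## \<omega>) else 0) \<partial>MM)"
    by (rule one_step) measurable
  also have "\<dots> = ennreal (1 - p) * (\<integral>\<^sup>+\<omega>. f (pre 0 \<omega>) \<partial>MM)"
    by (simp add: cond_def pre_def)
  finally show ?case by simp
next
  case (Suc j)
  note [measurable] = Suc.prems
  have "(\<integral>\<^sup>+\<omega>. (if cond (Suc j) \<omega> then f \<omega> else 0) \<partial>MM) =
     ennreal p * (\<integral>\<^sup>+\<omega>. (if cond (Suc j) (True ## \<omega>) then f (True ## \<omega>) else 0) \<partial>MM) +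
     ennreal (1 - p) * (\<integral>\<^sup>+\<omega>. (if cond (Suc j) (False ## \<omega>) then f (False ## \<omega>) else 0) \<partial>MM)"
    by (rule one_step) measurable
  also have "\<dots> = ennreal p * (\<integral>\<^sup>+\<omega>. (if cond j \<omega> then f (True ## \<omega>) else 0) \<partial>MM)"
  proof -
    have "cond (Suc j) (True ## \<omega>) = cond j \<omega>" for \<omega>
      unfolding cond_def using all_less_True_Stream by simp
    moreover have "\<not> cond (Suc j) (False ## \<omega>)" for \<omega>
      unfolding cond_def by auto
    ultimately show ?thesis by simp
  qed
  also have "\<dots> = ennreal p * (ennreal (p ^ j * (1 - p)) * (\<integral>\<^sup>+\<omega>. f (True ## pre j \<omega>) \<partial>MM))"
    by (subst Suc.IH) (auto)
  also have "\<dots> = ennreal (p ^ Suc j * (1 - p)) * (\<integral>\<^sup>+\<omega>. f (pre (Suc j) \<omega>) \<partial>MM)"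
    using p0 p1 by (simp add: pre_Suc ennreal_mult' mult.assoc)
  finally show ?case .
qed

lemma ennreal_fix:
  fixes x :: ennreal
  assumes "x \<noteq> top" "x \<le> ennreal a * x" "0 \<le> a" "a < 1"
  shows "x = 0"
proof -
  obtain r where r: "x = ennreal r" "0 \<le> r" using assms(1) by (cases x rule: ennreal_cases) auto
  have "ennreal a * ennreal r = ennreal (a * r)" using assms r by (simp add: ennreal_mult)
  then have "ennreal r \<le> ennreal (a * r)" using assms(2) r by simp
  then have "r \<le> a * r" using assms r by (subst (asm) ennreal_le_iff) auto
  then have "r * (1 - a) \<le> 0" by (simp add: algebra_simps)
  moreover have "1 - a > 0" using assms by simp
  ultimately have "r \<le> 0" by (simp add: mult_le_0_iff)
  then have "r = 0" using r by simp
  then show ?thesis using r by simp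
qed

lemma nn_le_1:
  assumes "f \<in> borel_measurable MM" "\<And>\<omega>. f \<omega> \<le> 1"
  shows "(\<integral>\<^sup>+\<omega>. f \<omega> \<partial>MM) \<noteq> top"
proof -
  interpret prob_space MM by (rule prob_MM)
  have "(\<integral>\<^sup>+\<omega>. f \<omega> \<partial>MM) \<le> (\<integral>\<^sup>+\<omega>. 1 \<partial>MM)"
    by (rule nn_integral_mono) (use assms in auto)
  also have "\<dots> = 1" by (simp add: emeasure_space_1)
  also have "(1::ennreal) < top" by simp
  finally show ?thesis by simp
qed

lemma AE_not_all_true: "AE \<omega> in MM. \<not> (\<forall>i. \<omega> !! i)"
proof -
  define f where "f \<omega> = (if \<forall>i. \<omega> !! i then 1 else 0 :: ennreal)" for \<omega>
  have [measurable]: "f \<in> borel_measurable MM" unfolding f_def by measurable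
  have "(\<integral>\<^sup>+\<omega>. f \<omega> \<partial>MM) = ennreal p * (\<integral>\<^sup>+\<omega>. f (True ## \<omega>) \<partial>MM) + ennreal (1 - p) * (\<integral>\<^sup>+\<omega>. f (False ## \<omega>) \<partial>MM)"
    by (rule one_step) measurable
  also have "\<dots> = ennreal p * (\<integral>\<^sup>+\<omega>. f \<omega> \<partial>MM)"
  proof -
    have "f (True ## \<omega>) = f \<omega>" for \<omega>
      unfolding f_def using all_True_Stream by simp
    moreover have "f (False ## \<omega>) = 0" for \<omega>
    proof -
      have "\<not> (False ## \<omega>) !! 0" by simp
      then show ?thesis unfolding f_def by (auto simp del: snth.simps)
    qed
    ultimately show ?thesis by simp
  qed
  finally have "(\<integral>\<^sup>+\<omega>. f \<omega> \<partial>MM) = 0"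
    by (intro ennreal_fix[of _ p] nn_le_1) (use p0 p1 in \<open>auto simp: f_def\<close>)
  then have "AE \<omega> in MM. f \<omega> = 0" by (subst (asm) nn_integral_0_iff_AE) auto
  then show ?thesis by eventually_elim (auto simp: f_def split: if_splits)
qed

lemma G:
  assumes [measurable]: "f \<in> borel_measurable MM"
  shows "(\<integral>\<^sup>+\<omega>. f \<omega> \<partial>MM) = (\<Sum>j. ennreal (p ^ j * (1 - p)) * (\<integral>\<^sup>+\<omega>. f (pre j \<omega>) \<partial>MM))"
proof -
  have "AE \<omega> in MM. f \<omega> = (\<Sum>j. if cond j \<omega> then f \<omega> else 0)"
    using AE_not_all_true
  proof eventually_elim
    case (elim \<omega>)
    define j0 where "j0 = (LEAST i. \<not> \<omega> !! i)"
    have c: "cond j \<omega> \<longleftrightarrow> j = j0" for j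
    proof
      assume "cond j \<omega>"
      then have "\<not> \<omega> !! j" "\<forall>i<j. \<omega> !! i" by (auto simp: cond_def)
      then show "j = j0" unfolding j0_def
        by (intro Least_equality[symmetric]) (auto simp: not_less[symmetric])
    next
      assume "j = j0"
      obtain x where "\<not> \<omega> !! x" using elim by blast
      then have "\<not> \<omega> !! j0" unfolding j0_def by (rule LeastI)
      then show "cond j \<omega>" using \<open>j = j0\<close> unfolding cond_def j0_def
        by (auto dest: not_less_Least)
    qed
    have "(\<Sum>j. if cond j \<omega> then f \<omega> else 0) = (\<Sum>j\<in>{j0}. if cond j \<omega> then f \<omega> else 0)"
      by (rule suminf_finite) (auto simp: c)
    then show ?case by (simp add: c)
  qed
  then have "(\<integral>\<^sup>+\<omega>. f \<omega> \<partial>MM) = (\<integral>\<^sup>+\<omega>. (\<Sum>j. if cond j \<omega> then f \<omega> else 0) \<partial>MM)"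
    by (rule nn_integral_cong_AE)
  also have "\<dots> = (\<Sum>j. (\<integral>\<^sup>+\<omega>. (if cond j \<omega> then f \<omega> else 0) \<partial>MM))"
    by (rule nn_integral_suminf) measurable
  also have "\<dots> = (\<Sum>j. ennreal (p ^ j * (1 - p)) * (\<integral>\<^sup>+\<omega>. f (pre j \<omega>) \<partial>MM))"
    by (simp add: prefix)
  finally show ?thesis .
qed

end


lemma geom_sum: "(\<Sum>j<k. p ^ j * (1 - p)) = 1 - (p::real) ^ k"
  by (induction k) (auto simp: algebra_simps)

lemma polyexp:
  fixes z :: real
  assumes "z > 1"
  shows "\<exists>C. \<forall>l. real l ^ n \<le> C * z ^ l"
proof -
  have "(\<lambda>l. (real l + of_int 0) ^ n * (1 / z) ^ l) sums ((\<Sum>i\<le>n. of_int (gE 0 n i) * (1 / z) ^ i) / (1 - 1 / z) ^ Suc n)"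
    by (rule series_AF) (use assms in auto)
  then have "summable (\<lambda>l. real l ^ n * (1 / z) ^ l)" by (simp add: sums_iff)
  then have "(\<lambda>l. real l ^ n * (1 / z) ^ l) \<longlonglongrightarrow> 0" by (rule summable_LIMSEQ_zero)
  then have "Bseq (\<lambda>l. real l ^ n * (1 / z) ^ l)" by (intro convergent_imp_Bseq convergentI)
  then obtain K where K: "\<And>l. norm (real l ^ n * (1 / z) ^ l) \<le> K" by (auto simp: Bseq_def)
  have "real l ^ n \<le> K * z ^ l" for l
  proof -
    have "real l ^ n * (1 / z) ^ l \<le> K" using K[of l] by simp
    then have "real l ^ n * (1 / z) ^ l * z ^ l \<le> K * z ^ l" using assms by (intro mult_right_mono) auto
    moreover have "(1 / z) ^ l * z ^ l = 1" using assms by (simp add: power_one_over field_simps)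
    ultimately show ?thesis by (simp add: mult.assoc)
  qed
  then show ?thesis by blast
qed

locale coink = coin +
  fixes k :: nat
  assumes k1: "1 \<le> k"
begin

abbreviation "Y \<equiv> hkt_time k"

lemma AE_occ: "AE \<omega> in MM. \<exists>m. PP k \<omega> m"
proof -
  define f where "f \<omega> = (if \<exists>m. PP k \<omega> m then 0 else 1 :: ennreal)" for \<omega>
  have [measurable]: "f \<in> borel_measurable MM" unfolding f_def by measurable
  have "(\<integral>\<^sup>+\<omega>. f \<omega> \<partial>MM) = (\<Sum>j. ennreal (p ^ j * (1 - p)) * (\<integral>\<^sup>+\<omega>. f (pre j \<omega>) \<partial>MM))"
    by (rule G) measurable
  also have "\<dots> = (\<Sum>j. if j < k then ennreal (p ^ j * (1 - p)) * (\<integral>\<^sup>+\<omega>. f \<omega> \<partial>MM) else 0)"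
  proof (intro suminf_cong)
    fix j
    show "ennreal (p ^ j * (1 - p)) * (\<integral>\<^sup>+\<omega>. f (pre j \<omega>) \<partial>MM) =
      (if j < k then ennreal (p ^ j * (1 - p)) * (\<integral>\<^sup>+\<omega>. f \<omega> \<partial>MM) else 0)"
    proof (cases "j < k")
      case True
      then have "f (pre j \<omega>) = f \<omega>" for \<omega> unfolding f_def using ex_PP_pre_lt[OF True] by simp
      then show ?thesis using True by simp
    next
      case False
      then have "f (pre j \<omega>) = 0" for \<omega> unfolding f_def using ex_PP_pre_ge[of k j] by auto
      then show ?thesis using False by simp
    qed
  qed
  also have "\<dots> = (\<Sum>j<k. ennreal (p ^ j * (1 - p)) * (\<integral>\<^sup>+\<omega>. f \<omega> \<partial>MM))"
    by (subst suminf_finite[of "{..<k}"]) auto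
  also have "\<dots> = ennreal (\<Sum>j<k. p ^ j * (1 - p)) * (\<integral>\<^sup>+\<omega>. f \<omega> \<partial>MM)"
    using p0 p1 by (simp add: sum_distrib_right[symmetric])
  also have "\<dots> = ennreal (1 - p ^ k) * (\<integral>\<^sup>+\<omega>. f \<omega> \<partial>MM)" by (simp add: geom_sum)
  finally have "(\<integral>\<^sup>+\<omega>. f \<omega> \<partial>MM) = 0"
    by (intro ennreal_fix[of _ "1 - p ^ k"] nn_le_1) (use p0 p1 in \<open>auto simp: f_def power_le_one\<close>)
  then have "AE \<omega> in MM. f \<omega> = 0" by (subst (asm) nn_integral_0_iff_AE) auto
  then show ?thesis by eventually_elim (auto simp: f_def split: if_splits)
qed

lemma meas_Y[measurable]: "Y \<in> measurable MM (count_space UNIV)"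
  by measurable

lemma AE_pre: "j < k \<Longrightarrow> AE \<omega> in MM. Y (pre j \<omega>) = j + 1 + Y \<omega>"
  using AE_occ by eventually_elim (simp add: hkt_pre_lt)

lemma choose_z: "\<exists>z. 1 < z \<and> p * z < 1 \<and> (1 - p ^ k) * z ^ k < 1"
proof -
  define a where "a = p ^ k"
  have a: "0 < a" "a < 1" using p0 p1 k1 by (auto simp: a_def power_less_one_iff)
  define r1 where "r1 = 1 / p"
  define r2 where "r2 = root k (1 / (1 - a))"
  have r1: "1 < r1" using p0 p1 by (simp add: r1_def)
  have r2: "1 < r2" using a k1 by (simp add: r2_def)
  define z where "z = (1 + min r1 r2) / 2"
  have z: "1 < z" "z < r1" "z < r2" using r1 r2 by (auto simp: z_def)
  have "p * z < p * r1" using z p0 by simp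
  also have "p * r1 = 1" using p0 by (simp add: r1_def)
  finally have 1: "p * z < 1" .
  have "z ^ k < r2 ^ k" using z k1 by (intro power_strict_mono) auto
  also have "r2 ^ k = 1 / (1 - a)" using k1 a unfolding r2_def by (intro real_root_pow_pos2) auto
  finally have "(1 - a) * z ^ k < 1" using a by (simp add: field_simps)
  then show ?thesis using 1 z unfolding a_def by blast
qed

lemma trunc_bound:
  assumes z: "1 < z" "p * z < 1" "(1 - p ^ k) * z ^ k < 1"
  defines "F \<equiv> (\<Sum>j. p ^ j * (1 - p) * z ^ (j + 1))"
  defines "g \<equiv> (1 - p ^ k) * z ^ k"
  shows "(\<integral>\<^sup>+\<omega>. ennreal (z ^ min (Y \<omega>) N) \<partial>MM) \<le> ennreal (F / (1 - g))"
proof -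
  interpret P: prob_space MM by (rule prob_MM)
  define c where "c = (\<integral>\<^sup>+\<omega>. ennreal (z ^ min (Y \<omega>) N) \<partial>MM)"
  have "c \<le> (\<integral>\<^sup>+\<omega>. ennreal (z ^ N) \<partial>MM)"
    unfolding c_def using z by (intro nn_integral_mono ennreal_leI power_increasing) auto
  also have "\<dots> = ennreal (z ^ N)" by (simp add: P.emeasure_space_1)
  also have "\<dots> < top" by simp
  finally have "c \<noteq> top" by simp
  then obtain r where r: "c = ennreal r" "0 \<le> r" by (cases c rule: ennreal_cases) auto
  have sF: "summable (\<lambda>j. p ^ j * (1 - p) * z ^ (j + 1))"
  proof -
    have "summable (\<lambda>j. (1 - p) * z * (p * z) ^ j)"
      using z p0 by (intro summable_mult summable_geometric) auto
    then show ?thesis by (simp add: power_mult_distrib algebra_simps)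
  qed
  have t0: "0 \<le> p ^ j * (1 - p) * (z ^ (j + 1) * (if j < k then r else 1))" for j
    using p0 p1 z r by auto
  have sT: "summable (\<lambda>j. p ^ j * (1 - p) * (z ^ (j + 1) * (if j < k then r else 1)))"
  proof (rule summable_comparison_test'[where g = "\<lambda>j. (r + 1) * (p ^ j * (1 - p) * z ^ (j + 1))"])
    show "summable (\<lambda>j. (r + 1) * (p ^ j * (1 - p) * z ^ (j + 1)))" using sF by (rule summable_mult)
  next
    fix j
    have "(if j < k then r else 1) \<le> r + 1" using r by auto
    then have "p ^ j * (1 - p) * (z ^ (j + 1) * (if j < k then r else 1)) \<le> p ^ j * (1 - p) * (z ^ (j + 1) * (r + 1))"
      using p0 p1 z by (intro mult_left_mono) auto
    then show "norm (p ^ j * (1 - p) * (z ^ (j + 1) * (if j < k then r else 1))) \<le> (r + 1) * (p ^ j * (1 - p) * z ^ (j + 1))"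
      using t0[of j] by (simp add: algebra_simps)
  qed
  have bj: "(\<integral>\<^sup>+\<omega>. ennreal (z ^ min (Y (pre j \<omega>)) N) \<partial>MM) \<le> ennreal (z ^ (j + 1) * (if j < k then r else 1))" for j
  proof (cases "j < k")
    case True
    have "(\<integral>\<^sup>+\<omega>. ennreal (z ^ min (Y (pre j \<omega>)) N) \<partial>MM) \<le> (\<integral>\<^sup>+\<omega>. ennreal (z ^ (j + 1)) * ennreal (z ^ min (Y \<omega>) N) \<partial>MM)"
    proof (rule nn_integral_mono_AE)
      show "AE \<omega> in MM. ennreal (z ^ min (Y (pre j \<omega>)) N) \<le> ennreal (z ^ (j + 1)) * ennreal (z ^ min (Y \<omega>) N)"
        using AE_pre[OF True]
      proof eventually_elim
        case (elim \<omega>)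
        have "z ^ min (Y (pre j \<omega>)) N \<le> z ^ (j + 1 + min (Y \<omega>) N)"
          using z elim by (intro power_increasing) auto
        also have "\<dots> = z ^ (j + 1) * z ^ min (Y \<omega>) N" by (simp add: power_add)
        finally show ?case using z by (simp add: ennreal_mult[symmetric])
      qed
    qed
    also have "\<dots> = ennreal (z ^ (j + 1)) * c" unfolding c_def by (rule nn_integral_cmult) measurable
    also have "\<dots> = ennreal (z ^ (j + 1) * (if j < k then r else 1))"
      using True r z by (simp add: ennreal_mult)
    finally show ?thesis .
  next
    case False
    have "(\<integral>\<^sup>+\<omega>. ennreal (z ^ min (Y (pre j \<omega>)) N) \<partial>MM) \<le> (\<integral>\<^sup>+\<omega>. ennreal (z ^ (j + 1)) \<partial>MM)"
      using False z by (intro nn_integral_mono ennreal_leI power_increasing) (auto simp: hkt_pre_ge)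
    also have "\<dots> = ennreal (z ^ (j + 1) * (if j < k then r else 1))"
      using False by (simp add: P.emeasure_space_1)
    finally show ?thesis .
  qed
  have "c = (\<Sum>j. ennreal (p ^ j * (1 - p)) * (\<integral>\<^sup>+\<omega>. ennreal (z ^ min (Y (pre j \<omega>)) N) \<partial>MM))"
    unfolding c_def by (rule G) measurable
  also have "\<dots> \<le> (\<Sum>j. ennreal (p ^ j * (1 - p)) * ennreal (z ^ (j + 1) * (if j < k then r else 1)))"
    by (intro suminf_le summableI mult_left_mono bj) auto
  also have "\<dots> = (\<Sum>j. ennreal (p ^ j * (1 - p) * (z ^ (j + 1) * (if j < k then r else 1))))"
  proof (intro suminf_cong)
    fix j
    show "ennreal (p ^ j * (1 - p)) * ennreal (z ^ (j + 1) * (if j < k then r else 1)) =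
          ennreal (p ^ j * (1 - p) * (z ^ (j + 1) * (if j < k then r else 1)))"
      by (rule ennreal_mult[symmetric]) (use p0 p1 z r in auto)
  qed
  also have "\<dots> = ennreal (\<Sum>j. p ^ j * (1 - p) * (z ^ (j + 1) * (if j < k then r else 1)))"
    by (rule suminf_ennreal2[OF t0 sT])
  finally have a: "c \<le> ennreal (\<Sum>j. p ^ j * (1 - p) * (z ^ (j + 1) * (if j < k then r else 1)))" .
  have r1: "r \<le> (\<Sum>j. p ^ j * (1 - p) * (z ^ (j + 1) * (if j < k then r else 1)))"
  proof -
    have "0 \<le> (\<Sum>j. p ^ j * (1 - p) * (z ^ (j + 1) * (if j < k then r else 1)))"
      by (rule suminf_nonneg[OF sT t0])
    then show ?thesis using a r by (simp add: ennreal_le_iff)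
  qed
  have sA: "summable (\<lambda>j. if j < k then p ^ j * (1 - p) * z ^ (j + 1) * r else 0)"
    by (rule summable_finite[of "{..<k}"]) auto
  have "(\<Sum>j. p ^ j * (1 - p) * (z ^ (j + 1) * (if j < k then r else 1)))
      \<le> (\<Sum>j. (if j < k then p ^ j * (1 - p) * z ^ (j + 1) * r else 0) + p ^ j * (1 - p) * z ^ (j + 1))"
  proof (rule suminf_le)
    fix j
    show "p ^ j * (1 - p) * (z ^ (j + 1) * (if j < k then r else 1))
      \<le> (if j < k then p ^ j * (1 - p) * z ^ (j + 1) * r else 0) + p ^ j * (1 - p) * z ^ (j + 1)"
      using p0 p1 z r by (auto simp: algebra_simps)
  qed (use sT sA sF in \<open>auto intro: summable_add\<close>)
  also have "\<dots> = (\<Sum>j. if j < k then p ^ j * (1 - p) * z ^ (j + 1) * r else 0) + F"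
    unfolding F_def by (rule suminf_add[symmetric, OF sA sF])
  also have "(\<Sum>j. if j < k then p ^ j * (1 - p) * z ^ (j + 1) * r else 0) = (\<Sum>j<k. p ^ j * (1 - p) * z ^ (j + 1) * r)"
    by (subst suminf_finite[of "{..<k}"]) auto
  also have "\<dots> \<le> (\<Sum>j<k. p ^ j * (1 - p) * z ^ k * r)"
    using p0 p1 z r by (intro sum_mono mult_right_mono mult_left_mono power_increasing) auto
  also have "\<dots> = (\<Sum>j<k. p ^ j * (1 - p)) * (z ^ k * r)"
    by (simp add: sum_distrib_right mult.assoc)
  also have "\<dots> = g * r" unfolding g_def geom_sum by simp
  finally have "r \<le> g * r + F" using r1 by simp
  then have "r * (1 - g) \<le> F" by (simp add: algebra_simps)
  then have "r \<le> F / (1 - g)" using z unfolding g_def by (simp add: field_simps)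
  then show ?thesis using r c_def by (simp add: ennreal_leI)
qed

lemma exp_fin: "\<exists>z>1. (\<integral>\<^sup>+\<omega>. ennreal (z ^ Y \<omega>) \<partial>MM) < top"
proof -
  obtain z where z: "1 < z" "p * z < 1" "(1 - p ^ k) * z ^ k < 1" using choose_z by blast
  define B where "B = ennreal ((\<Sum>j. p ^ j * (1 - p) * z ^ (j + 1)) / (1 - (1 - p ^ k) * z ^ k))"
  have pt: "ennreal (z ^ Y \<omega>) = (SUP N. ennreal (z ^ min (Y \<omega>) N))" for \<omega>
  proof (rule antisym)
    show "ennreal (z ^ Y \<omega>) \<le> (SUP N. ennreal (z ^ min (Y \<omega>) N))"
      by (rule SUP_upper2[of "Y \<omega>"]) auto
    show "(SUP N. ennreal (z ^ min (Y \<omega>) N)) \<le> ennreal (z ^ Y \<omega>)"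
      using z by (intro SUP_least ennreal_leI power_increasing) auto
  qed
  have "(\<integral>\<^sup>+\<omega>. ennreal (z ^ Y \<omega>) \<partial>MM) = (\<integral>\<^sup>+\<omega>. (SUP N. ennreal (z ^ min (Y \<omega>) N)) \<partial>MM)"
    by (simp add: pt)
  also have "\<dots> = (SUP N. (\<integral>\<^sup>+\<omega>. ennreal (z ^ min (Y \<omega>) N) \<partial>MM))"
  proof (rule nn_integral_monotone_convergence_SUP)
    show "incseq (\<lambda>N \<omega>. ennreal (z ^ min (Y \<omega>) N))"
      using z by (auto simp: incseq_def le_fun_def intro!: ennreal_leI power_increasing)
  qed measurable
  also have "\<dots> \<le> B" unfolding B_def by (intro SUP_least trunc_bound z)
  also have "B < top" by (simp add: B_def)
  finally show ?thesis using z by blast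
qed

lemma mom_fin: "(\<integral>\<^sup>+\<omega>. ennreal ((real c + real (Y \<omega>)) ^ n) \<partial>MM) < top"
proof -
  obtain z where z: "1 < z" "(\<integral>\<^sup>+\<omega>. ennreal (z ^ Y \<omega>) \<partial>MM) < top" using exp_fin by blast
  obtain C where C: "\<And>l. real l ^ n \<le> C * z ^ l" using polyexp[OF z(1), of n] by blast
  have C0: "0 \<le> C" using C[of 0] by (cases n) auto
  have "(\<integral>\<^sup>+\<omega>. ennreal ((real c + real (Y \<omega>)) ^ n) \<partial>MM) \<le> (\<integral>\<^sup>+\<omega>. ennreal (C * z ^ c) * ennreal (z ^ Y \<omega>) \<partial>MM)"
  proof (rule nn_integral_mono)
    fix \<omega>
    have "(real c + real (Y \<omega>)) ^ n = real (c + Y \<omega>) ^ n" by simp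
    also have "\<dots> \<le> C * z ^ (c + Y \<omega>)" by (rule C)
    also have "\<dots> = C * z ^ c * z ^ Y \<omega>" by (simp add: power_add)
    finally show "ennreal ((real c + real (Y \<omega>)) ^ n) \<le> ennreal (C * z ^ c) * ennreal (z ^ Y \<omega>)"
      using C0 z by (simp add: ennreal_mult[symmetric] ennreal_leI)
  qed
  also have "\<dots> = ennreal (C * z ^ c) * (\<integral>\<^sup>+\<omega>. ennreal (z ^ Y \<omega>) \<partial>MM)"
    by (rule nn_integral_cmult) measurable
  also have "\<dots> < top" using z by (simp add: ennreal_mult_less_top)
  finally show ?thesis .
qed

lemma integ: "integrable MM (\<lambda>\<omega>. (real c + real (Y \<omega>)) ^ n)"
  by (rule integrableI_nonneg) (use mom_fin in auto)

lemma integ0: "integrable MM (\<lambda>\<omega>. real (Y \<omega>) ^ n)"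
  using integ[of 0 n] by simp

end


context coink
begin

definition mom :: "nat \<Rightarrow> real" where
  "mom n = (\<integral>\<omega>. real (Y \<omega>) ^ n \<partial>MM)"

definition tt :: "nat \<Rightarrow> nat \<Rightarrow> real" where
  "tt n j = (if j < k then (\<integral>\<omega>. (real (j + 1) + real (Y \<omega>)) ^ n \<partial>MM) else (real j + 1) ^ n)"

lemma summable_S: "summable (\<lambda>j. p ^ j * (1 - p) * (real j + 1) ^ n)"
proof -
  have "(\<lambda>l. (real l + of_int 1) ^ n * p ^ l) sums ((\<Sum>i\<le>n. of_int (gE 1 n i) * p ^ i) / (1 - p) ^ Suc n)"
    by (rule series_AF) (use p0 p1 in auto)
  then have "summable (\<lambda>l. (1 - p) * ((real l + 1) ^ n * p ^ l))" by (intro summable_mult) (simp add: sums_iff)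
  then show ?thesis by (simp add: algebra_simps)
qed

lemma key: "mom n = (\<Sum>j. p ^ j * (1 - p) * tt n j)"
proof -
  interpret P: prob_space MM by (rule prob_MM)
  have tt0: "0 \<le> tt n j" for j by (auto simp: tt_def)
  have nn: "(\<integral>\<^sup>+\<omega>. ennreal (real (Y (pre j \<omega>)) ^ n) \<partial>MM) = ennreal (tt n j)" for j
  proof (cases "j < k")
    case True
    have "(\<integral>\<^sup>+\<omega>. ennreal (real (Y (pre j \<omega>)) ^ n) \<partial>MM) = (\<integral>\<^sup>+\<omega>. ennreal ((real (j + 1) + real (Y \<omega>)) ^ n) \<partial>MM)"
      by (rule nn_integral_cong_AE) (use AE_pre[OF True] in \<open>eventually_elim, simp add: add.assoc\<close>)
    also have "\<dots> = ennreal (\<integral>\<omega>. (real (j + 1) + real (Y \<omega>)) ^ n \<partial>MM)"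
      by (rule nn_integral_eq_integral[OF integ]) auto
    finally show ?thesis using True by (simp add: tt_def)
  next
    case False
    then show ?thesis by (simp add: tt_def hkt_pre_ge P.emeasure_space_1 add.commute)
  qed
  have sT: "summable (\<lambda>j. p ^ j * (1 - p) * tt n j)"
  proof -
    have "eventually (\<lambda>j. p ^ j * (1 - p) * tt n j = p ^ j * (1 - p) * (real j + 1) ^ n) sequentially"
      by (rule eventually_sequentiallyI[of k]) (simp add: tt_def)
    then show ?thesis using summable_S[of n] by (subst summable_cong) auto
  qed
  have "ennreal (mom n) = (\<integral>\<^sup>+\<omega>. ennreal (real (Y \<omega>) ^ n) \<partial>MM)"
    unfolding mom_def by (rule nn_integral_eq_integral[OF integ0, symmetric]) auto
  also have "\<dots> = (\<Sum>j. ennreal (p ^ j * (1 - p)) * (\<integral>\<^sup>+\<omega>. ennreal (real (Y (pre j \<omega>)) ^ n) \<partial>MM))"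
    by (rule G) measurable
  also have "\<dots> = (\<Sum>j. ennreal (p ^ j * (1 - p) * tt n j))"
    unfolding nn using p0 p1 tt0 by (simp add: ennreal_mult)
  also have "\<dots> = ennreal (\<Sum>j. p ^ j * (1 - p) * tt n j)"
    by (rule suminf_ennreal2[OF _ sT]) (use p0 p1 tt0 in auto)
  finally have "ennreal (mom n) = ennreal (\<Sum>j. p ^ j * (1 - p) * tt n j)" .
  moreover have "0 \<le> mom n" unfolding mom_def by auto
  moreover have "0 \<le> (\<Sum>j. p ^ j * (1 - p) * tt n j)"
    by (rule suminf_nonneg[OF sT]) (use p0 p1 tt0 in auto)
  ultimately show ?thesis by simp
qed

lemma mom0: "mom 0 = 1"
proof -
  interpret P: prob_space MM by (rule prob_MM)
  show ?thesis by (simp add: mom_def P.prob_space)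
qed

lemma tt_lt: "j < k \<Longrightarrow> tt n j = (\<Sum>i\<le>n. real (n choose i) * mom i * (real j + 1) ^ (n - i))"
proof -
  assume j: "j < k"
  have "tt n j = (\<integral>\<omega>. (\<Sum>i\<le>n. (real (n choose i) * (real j + 1) ^ (n - i)) * real (Y \<omega>) ^ i) \<partial>MM)"
  proof -
    have "(real (j + 1) + y) ^ n = (\<Sum>i\<le>n. (real (n choose i) * (real j + 1) ^ (n - i)) * y ^ i)" for y :: real
    proof -
      have "(real (j + 1) + y) ^ n = (y + (real j + 1)) ^ n" by (simp add: add.commute)
      also have "\<dots> = (\<Sum>i\<le>n. real (n choose i) * y ^ i * (real j + 1) ^ (n - i))" by (rule binomial_ring)
      finally show ?thesis by (simp add: algebra_simps)
    qed
    then show ?thesis unfolding tt_def using j by simp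
  qed
  also have "\<dots> = (\<Sum>i\<le>n. (\<integral>\<omega>. (real (n choose i) * (real j + 1) ^ (n - i)) * real (Y \<omega>) ^ i \<partial>MM))"
    by (rule Bochner_Integration.integral_sum) (intro integrable_mult_right integ0)
  also have "\<dots> = (\<Sum>i\<le>n. real (n choose i) * mom i * (real j + 1) ^ (n - i))"
    unfolding mom_def by (simp add: algebra_simps)
  finally show ?thesis .
qed

lemma split_sum:
  fixes n :: nat
  assumes "1 \<le> n"
  shows "(\<Sum>i\<le>n. f i) = f 0 + (\<Sum>i=1..n-1. f i) + (f n :: real)"
proof -
  have "{..n} = insert 0 (insert n {1..n-1})"
  proof (rule set_eqI)
    fix x
    show "x \<in> {..n} \<longleftrightarrow> x \<in> insert 0 (insert n {1..n-1})"
      using assms by (cases "x = 0"; cases "x = n") auto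
  qed
  then show ?thesis using assms by (simp add: algebra_simps)
qed

definition S :: "nat \<Rightarrow> real" where
  "S n = (\<Sum>j. p ^ j * (1 - p) * (real j + 1) ^ n)"

lemma rec1:
  assumes n: "1 \<le> n"
  shows "mom n = (\<Sum>i=1..n-1. real (n choose i) * mom i * ((\<Sum>j<k. p ^ j * (1 - p) * (real j + 1) ^ (n - i)) / p ^ k))
     + S n / p ^ k"
proof -
  define X where "X i = (\<Sum>j<k. p ^ j * (1 - p) * (real j + 1) ^ (n - i))" for i
  define R where "R j = (\<Sum>i=1..n-1. real (n choose i) * mom i * (real j + 1) ^ (n - i))" for j
  have ttR: "tt n j = (real j + 1) ^ n + R j + mom n" if "j < k" for j
    unfolding tt_lt[OF that] R_def using split_sum[OF n, of "\<lambda>i. real (n choose i) * mom i * (real j + 1) ^ (n - i)"]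
    by (simp add: mom0)
  have sA: "summable (\<lambda>j. if j < k then p ^ j * (1 - p) * (R j + mom n) else 0)"
    by (rule summable_finite[of "{..<k}"]) auto
  have "mom n = (\<Sum>j. p ^ j * (1 - p) * tt n j)" by (rule key)
  also have "\<dots> = (\<Sum>j. p ^ j * (1 - p) * (real j + 1) ^ n + (if j < k then p ^ j * (1 - p) * (R j + mom n) else 0))"
  proof (intro suminf_cong)
    fix j
    show "p ^ j * (1 - p) * tt n j = p ^ j * (1 - p) * (real j + 1) ^ n + (if j < k then p ^ j * (1 - p) * (R j + mom n) else 0)"
      by (cases "j < k") (simp add: ttR algebra_simps, simp add: tt_def)
  qed
  also have "\<dots> = S n + (\<Sum>j. if j < k then p ^ j * (1 - p) * (R j + mom n) else 0)"
    unfolding S_def by (rule suminf_add[symmetric, OF summable_S sA])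
  also have "(\<Sum>j. if j < k then p ^ j * (1 - p) * (R j + mom n) else 0) = (\<Sum>j<k. p ^ j * (1 - p) * (R j + mom n))"
    by (subst suminf_finite[of "{..<k}"]) auto
  also have "\<dots> = (\<Sum>j<k. p ^ j * (1 - p) * R j) + (\<Sum>j<k. p ^ j * (1 - p)) * mom n"
    by (simp add: distrib_left sum.distrib sum_distrib_right)
  also have "(\<Sum>j<k. p ^ j * (1 - p) * R j) = (\<Sum>i=1..n-1. real (n choose i) * mom i * (\<Sum>j<k. p ^ j * (1 - p) * (real j + 1) ^ (n - i)))"
    unfolding R_def by (simp add: sum_distrib_left sum_distrib_right algebra_simps sum.swap[of _ "{..<k}"])
  finally have "mom n = S n + (\<Sum>i=1..n-1. real (n choose i) * mom i * (\<Sum>j<k. p ^ j * (1 - p) * (real j + 1) ^ (n - i))) + (1 - p ^ k) * mom n"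
    by (simp add: geom_sum)
  then have eq: "p ^ k * mom n = S n + (\<Sum>i=1..n-1. real (n choose i) * mom i * X i)"
    unfolding X_def by (simp add: algebra_simps)
  have "mom n = (p ^ k * mom n) / p ^ k" using p0 by simp
  also have "\<dots> = (\<Sum>i=1..n-1. real (n choose i) * mom i * X i) / p ^ k + S n / p ^ k"
    unfolding eq by (simp add: add_divide_distrib)
  also have "(\<Sum>i=1..n-1. real (n choose i) * mom i * X i) / p ^ k = (\<Sum>i=1..n-1. real (n choose i) * mom i * (X i / p ^ k))"
    by (simp add: sum_divide_distrib)
  finally show ?thesis unfolding X_def .
qed

end


lemma inner1:
  fixes p :: real
  assumes "p \<noteq> 0"
  shows "(\<Sum>i=1..k. (1 - p) * real i ^ m / p ^ (k - i + 1)) = (\<Sum>j<k. p ^ j * (1 - p) * (real j + 1) ^ m) / p ^ k"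
proof -
  have "(\<Sum>i=1..k. (1 - p) * real i ^ m / p ^ (k - i + 1)) = (\<Sum>j<k. (1 - p) * real (Suc j) ^ m / p ^ (k - Suc j + 1))"
    by (simp add: sum.atLeast1_atMost_eq)
  also have "\<dots> = (\<Sum>j<k. p ^ j * (1 - p) * (real j + 1) ^ m / p ^ k)"
  proof (rule sum.cong)
    fix j assume "j \<in> {..<k}"
    then have "k = (k - Suc j + 1) + j" by simp
    then have e: "p ^ k = p ^ (k - Suc j + 1) * p ^ j" by (metis power_add)
    show "(1 - p) * real (Suc j) ^ m / p ^ (k - Suc j + 1) = p ^ j * (1 - p) * (real j + 1) ^ m / p ^ k"
      unfolding e using assms by (simp add: field_simps)
  qed simp
  also have "\<dots> = (\<Sum>j<k. p ^ j * (1 - p) * (real j + 1) ^ m) / p ^ k"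
    by (simp add: sum_divide_distrib)
  finally show ?thesis .
qed

lemma outer1:
  fixes p :: real
  assumes "p \<noteq> 0" "summable (\<lambda>j. p ^ j * (1 - p) * (real j + 1) ^ n)"
  shows "(\<Sum>i. (1 - p) * real (Suc i) ^ n / p powi (int k - int (Suc i) + 1)) = (\<Sum>j. p ^ j * (1 - p) * (real j + 1) ^ n) / p ^ k"
proof -
  have "(\<lambda>i. (1 - p) * real (Suc i) ^ n / p powi (int k - int (Suc i) + 1)) = (\<lambda>j. p ^ j * (1 - p) * (real j + 1) ^ n / p ^ k)"
  proof
    fix i
    have "p powi (int k - int (Suc i) + 1) = p powi (int k - int i)" by simp
    also have "\<dots> = p ^ k / p ^ i" using assms by (simp add: power_int_diff)
    finally have h: "p powi (int k - int (Suc i) + 1) = p ^ k / p ^ i" .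
    show "(1 - p) * real (Suc i) ^ n / p powi (int k - int (Suc i) + 1) = p ^ i * (1 - p) * (real i + 1) ^ n / p ^ k"
      unfolding h using assms by (simp add: field_simps)
  qed
  then show ?thesis using suminf_divide[OF assms(2)] by simp
qed

lemma eulerian_zero: "i > n \<Longrightarrow> eulerian n i = 0"
  using gE_eulerian[of n i] gE_zero[of n i 0] by simp

lemma eulerian_k_zero: "i > n \<Longrightarrow> eulerian_k k n i = 0"
  using gE_eulerian_k[of k n i] gE_zero[of n i "k + 1"] by simp

lemma eul_S:
  fixes p :: real
  assumes p: "0 < p" "p < 1" and n: "1 \<le> n"
  shows "(\<Sum>j. p ^ j * (1 - p) * (real j + 1) ^ n) / p ^ k = (\<Sum>i=0..n. real (eulerian n i) * p ^ i / ((1 - p) ^ n * p ^ (k + 1)))"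
proof -
  define E where "E = (\<Sum>i\<le>n. of_int (gE 0 n i) * p ^ i)"
  have "(\<lambda>l. (real l + of_int 0) ^ n * p ^ l) sums (E / (1 - p) ^ Suc n)"
    unfolding E_def by (rule series_AF) (use p in auto)
  then have "(\<lambda>l. real (Suc l) ^ n * p ^ Suc l) sums (E / (1 - p) ^ Suc n)"
    using n by (subst sums_Suc_iff) (simp add: power_0_left)
  then have "(\<lambda>l. real (Suc l) ^ n * p ^ Suc l * ((1 - p) / p)) sums (E / (1 - p) ^ Suc n * ((1 - p) / p))"
    by (rule sums_mult2)
  moreover have "(\<lambda>l. real (Suc l) ^ n * p ^ Suc l * ((1 - p) / p)) = (\<lambda>j. p ^ j * (1 - p) * (real j + 1) ^ n)"
    using p by (auto simp: field_simps)
  ultimately have hS: "(\<Sum>j. p ^ j * (1 - p) * (real j + 1) ^ n) = E / (1 - p) ^ Suc n * ((1 - p) / p)"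
    by (simp add: sums_iff)
  have "(\<Sum>j. p ^ j * (1 - p) * (real j + 1) ^ n) / p ^ k = E / (1 - p) ^ Suc n * ((1 - p) / p) / p ^ k"
    by (simp only: hS)
  also have "\<dots> = E / ((1 - p) ^ n * p ^ (k + 1))"
    using p by (simp add: field_simps)
  also have "\<dots> = (\<Sum>i=0..n. real (eulerian n i) * p ^ i / ((1 - p) ^ n * p ^ (k + 1)))"
    unfolding E_def by (simp add: sum_divide_distrib atMost_atLeast0 gE_eulerian[symmetric])
  finally show ?thesis .
qed

lemma eul_inner:
  fixes p :: real
  assumes p: "0 < p" "p < 1" and m: "1 \<le> m" "m \<le> N"
  shows "(\<Sum>j<k. p ^ j * (1 - p) * (real j + 1) ^ m) / p ^ k =
    (\<Sum>i=0..N. (real (eulerian m i) * p ^ i - real_of_int (eulerian_k (int k) m i) * p ^ (k + i + 1))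
                        / ((1 - p) ^ m * p ^ (k + 1)))"
proof -
  define E where "E = (\<Sum>i\<le>m. of_int (gE 0 m i) * p ^ i)"
  define Ek where "Ek = (\<Sum>i\<le>m. of_int (gE (int k + 1) m i) * p ^ i)"
  define A where "A = (\<Sum>j<k. p ^ j * (real j + 1) ^ m)"
  define f where "f l = real l ^ m * p ^ l" for l
  have s0: "f sums (E / (1 - p) ^ Suc m)"
    using series_AF[of p 0 m] p unfolding E_def f_def by simp
  have sk: "(\<lambda>l. (real l + of_int (int k + 1)) ^ m * p ^ l) sums (Ek / (1 - p) ^ Suc m)"
    unfolding Ek_def by (rule series_AF) (use p in auto)
  have fe: "f (l + (k + 1)) = p ^ (k + 1) * ((real l + of_int (int k + 1)) ^ m * p ^ l)" for l
  proof -
    have h1: "p ^ (l + (k + 1)) = p ^ (k + 1) * p ^ l" by (simp add: power_add)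
    have h2: "real (l + (k + 1)) = real l + of_int (int k + 1)" by simp
    show ?thesis unfolding f_def by (subst h1, subst h2) (simp only: mult_ac)
  qed
  have sk': "(\<lambda>l. f (l + (k + 1))) sums (p ^ (k + 1) * (Ek / (1 - p) ^ Suc m))"
    unfolding fe by (rule sums_mult[OF sk])
  have "suminf f = (\<Sum>l. f (l + (k + 1))) + (\<Sum>l<k + 1. f l)"
    by (rule suminf_split_initial_segment) (use s0 in \<open>simp add: sums_iff\<close>)
  moreover have "(\<Sum>l<k + 1. f l) = p * A"
  proof -
    have "(\<Sum>l<k + 1. f l) = f 0 + (\<Sum>j<k. f (Suc j))" using sum.lessThan_Suc_shift[of f k] by simp
    also have "f 0 = 0" using m by (simp add: f_def power_0_left)
    also have "(\<Sum>j<k. f (Suc j)) = (\<Sum>j<k. p * (p ^ j * (real j + 1) ^ m))"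
      by (rule sum.cong) (auto simp: f_def algebra_simps)
    finally show ?thesis unfolding A_def by (simp add: sum_distrib_left)
  qed
  ultimately have eq: "E / (1 - p) ^ Suc m = p ^ (k + 1) * (Ek / (1 - p) ^ Suc m) + p * A"
    using s0 sk' by (simp add: sums_iff)
  have L0: "(\<Sum>j<k. p ^ j * (1 - p) * (real j + 1) ^ m) = (1 - p) * A"
    unfolding A_def by (simp add: sum_distrib_left algebra_simps)
  have A: "A = (E - p ^ (k + 1) * Ek) / ((1 - p) ^ Suc m * p)"
    using eq p by (simp add: field_simps)
  have L: "(\<Sum>j<k. p ^ j * (1 - p) * (real j + 1) ^ m) / p ^ k = (E - p ^ (k + 1) * Ek) / ((1 - p) ^ m * p ^ (k + 1))"
    unfolding L0 A using p by (simp add: field_simps)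
  have "(\<Sum>i=0..N. (real (eulerian m i) * p ^ i - real_of_int (eulerian_k (int k) m i) * p ^ (k + i + 1))
                        / ((1 - p) ^ m * p ^ (k + 1))) =
        (\<Sum>i\<le>m. (real (eulerian m i) * p ^ i - real_of_int (eulerian_k (int k) m i) * p ^ (k + i + 1))
                        / ((1 - p) ^ m * p ^ (k + 1)))"
    by (rule sum.mono_neutral_right) (use m in \<open>auto simp: eulerian_zero eulerian_k_zero\<close>)
  also have "\<dots> = ((\<Sum>i\<le>m. real (eulerian m i) * p ^ i) - (\<Sum>i\<le>m. real_of_int (eulerian_k (int k) m i) * p ^ (k + i + 1)))
                        / ((1 - p) ^ m * p ^ (k + 1))"
    by (simp add: sum_divide_distrib[symmetric] sum_subtractf)
  also have "(\<Sum>i\<le>m. real (eulerian m i) * p ^ i) = E"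
    unfolding E_def by (rule sum.cong) (auto simp: gE_eulerian[symmetric])
  also have "(\<Sum>i\<le>m. real_of_int (eulerian_k (int k) m i) * p ^ (k + i + 1)) = p ^ (k + 1) * Ek"
    unfolding Ek_def sum_distrib_left
  proof (rule sum.cong)
    fix i
    have "p ^ (k + i + 1) = p ^ (k + 1) * p ^ i" by (simp add: power_add[symmetric])
    then show "real_of_int (eulerian_k (int k) m i) * p ^ (k + i + 1) = p ^ (k + 1) * (of_int (gE (int k + 1) m i) * p ^ i)"
      by (simp add: gE_eulerian_k)
  qed simp
  finally show ?thesis using L by simp
qed



theorem theorem3p4:
  fixes p :: real and k :: nat
  assumes "0 < p" and "p < 1" and "1 \<le> k"
  defines "M \<equiv> stream_space (measure_pmf (bernoulli_pmf p))"
  shows "(\<integral>\<omega>. real (hkt_time k \<omega>) ^ 0 \<partial>M) = 1 \<and>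
    (\<forall>n\<ge>1.
      (\<integral>\<omega>. real (hkt_time k \<omega>) ^ n \<partial>M) =
        (\<Sum>j=1..n-1. real (n choose j) * (\<integral>\<omega>. real (hkt_time k \<omega>) ^ j \<partial>M) *
            (\<Sum>i=1..k. (1 - p) * real i ^ (n - j) / p ^ (k - i + 1)))
        + (\<Sum>i. (1 - p) * real (Suc i) ^ n / p powi (int k - int (Suc i) + 1))
    \<and>
      (\<integral>\<omega>. real (hkt_time k \<omega>) ^ n \<partial>M) =
        (\<Sum>j=1..n-1. real (n choose j) * (\<integral>\<omega>. real (hkt_time k \<omega>) ^ j \<partial>M) *
            (\<Sum>i=0..n. (real (eulerian (n - j) i) * p ^ i
                          - real_of_int (eulerian_k (int k) (n - j) i) * p ^ (k + i + 1))
                        / ((1 - p) ^ (n - j) * p ^ (k + 1))))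
        + (\<Sum>i=0..n. real (eulerian n i) * p ^ i / ((1 - p) ^ n * p ^ (k + 1))))"
proof -
  interpret coink p k by unfold_locales (use assms in auto)
  have momM: "(\<integral>\<omega>. real (hkt_time k \<omega>) ^ n \<partial>M) = mom n" for n
    unfolding mom_def M_def ..
  have p0: "p \<noteq> 0" using assms by simp
  show ?thesis
    unfolding momM
  proof (intro conjI allI impI)
    show "mom 0 = 1" by (rule mom0)
  next
    fix n :: nat assume n: "1 \<le> n"
    show "mom n = (\<Sum>j=1..n-1. real (n choose j) * mom j *
            (\<Sum>i=1..k. (1 - p) * real i ^ (n - j) / p ^ (k - i + 1)))
        + (\<Sum>i. (1 - p) * real (Suc i) ^ n / p powi (int k - int (Suc i) + 1))"
      unfolding rec1[OF n] inner1[OF p0] outer1[OF p0 summable_S] S_def ..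
  next
    fix n :: nat assume n: "1 \<le> n"
    have "mom n = (\<Sum>j=1..n-1. real (n choose j) * mom j * ((\<Sum>i<k. p ^ i * (1 - p) * (real i + 1) ^ (n - j)) / p ^ k))
     + S n / p ^ k" by (rule rec1[OF n])
    also have "\<dots> = (\<Sum>j=1..n-1. real (n choose j) * mom j *
            (\<Sum>i=0..n. (real (eulerian (n - j) i) * p ^ i
                          - real_of_int (eulerian_k (int k) (n - j) i) * p ^ (k + i + 1))
                        / ((1 - p) ^ (n - j) * p ^ (k + 1))))
        + (\<Sum>i=0..n. real (eulerian n i) * p ^ i / ((1 - p) ^ n * p ^ (k + 1)))"
    proof (intro arg_cong2[where f = "(+)"] sum.cong refl)
      fix j assume "j \<in> {1..n-1}"
      hence a: "1 \<le> n - j" and b: "n - j \<le> n" by auto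
      show "real (n choose j) * mom j * ((\<Sum>i<k. p ^ i * (1 - p) * (real i + 1) ^ (n - j)) / p ^ k) =
        real (n choose j) * mom j *
            (\<Sum>i=0..n. (real (eulerian (n - j) i) * p ^ i
                          - real_of_int (eulerian_k (int k) (n - j) i) * p ^ (k + i + 1))
                        / ((1 - p) ^ (n - j) * p ^ (k + 1)))"
        unfolding eul_inner[OF assms(1,2) a b, where k=k] by (rule refl)
    next
      show "S n / p ^ k = (\<Sum>i=0..n. real (eulerian n i) * p ^ i / ((1 - p) ^ n * p ^ (k + 1)))"
        unfolding S_def by (rule eul_S[OF assms(1,2) n])
    qed
    finally show "mom n = (\<Sum>j=1..n-1. real (n choose j) * mom j *
            (\<Sum>i=0..n. (real (eulerian (n - j) i) * p ^ i
                          - real_of_int (eulerian_k (int k) (n - j) i) * p ^ (k + i + 1))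
                        / ((1 - p) ^ (n - j) * p ^ (k + 1))))
        + (\<Sum>i=0..n. real (eulerian n i) * p ^ i / ((1 - p) ^ n * p ^ (k + 1)))" .
  qed
qed

end
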